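(* Let $C$ be an extended ADE curve, $\chi>0$ an integer, and $H$ an ample line bundle on $C$ with $\sum_{o\in O}b_o=\chi+|O|-1$. Then: (i) $b_i=1$ for every $i\in I$. (ii) Let $J\subset O$ and let $f$ be a number with $0\le f\le e_I:=\sum_{i\in I}m_ie_i$, and assume that $J\subsetneq O$ or $f<e_I$. Then \[1-|J|+\sum_{j\in J}b_j>\frac{f+\sum_{j\in J}e_j}{e}\,\chi.\]
   Context: Work over $\mathbb C$. Let $X$ be a smooth projective surface and $C=\sum_{v\in V}m_vC_v\subset X$ an effective divisor with smooth irreducible components $C_v$, at most two through any point, meeting transversally. The labelled intersection graph $\Gamma$ has vertex set $V$, one edge per intersection point, label $m_v$. $C$ is an \emph{extended ADE curve} if (1) $\Gamma$ is one of: $\tilde A_n$: a cycle of $n+1$ vertices (two vertices, two edges if $n=1$), all labels $1$; $\tilde D_n$ ($n\ge4$): a chain of $n-3$ label-$2$ vertices with two label-$1$ vertices attached to each end (for $n=4$, one label-$2$ vertex with four label-$1$ neighbours); $\tilde E_6$: central label-$3$ vertex with three arms (label $2$ then $1$); $\tilde E_7$: chain $1,2,3,4,3,2,1$ plus a label-$2$ vertex on the label-$4$ vertex; $\tilde E_8$: chain $2,4,6,5,4,3,2,1$ plus a label-$3$ vertex on the label-$6$ vertex; (2) each $C_i$ with $m_i\ge2$ is a smooth rational $(-2)$-curve. $O$ = vertices of label $1$, $I=V\setminus O$. $e_v=\deg(H|_{C_v})$, $e=\sum_vm_ve_v$, $b_v=\lceil e_v\chi/e\rceil$. *)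

theory Defs
  imports "HOL-Library.Multiset" Complex_Main
begin

text \<open>At n : cycle of n+1 vertices (n \<ge> 1), Dt n : n \<ge> 4, and E6, E7, E8.
  Standard models have vertex set {0..<length (ade_labels t)}; vertex k carries
  label ade_labels t ! k; edges form a multiset of 2-element vertex sets
  (multiset since for At 1 there are two edges between the two vertices).\<close>

datatype ade_type = At nat | Dt nat | Et6 | Et7 | Et8

fun ade_valid :: "ade_type \<Rightarrow> bool" where
  "ade_valid (At n) = (n \<ge> 1)"
| "ade_valid (Dt n) = (n \<ge> 4)"
| "ade_valid Et6 = True"
| "ade_valid Et7 = True"
| "ade_valid Et8 = True"

fun ade_labels :: "ade_type \<Rightarrow> nat list" where
  "ade_labels (At n) = replicate (n + 1) 1"
| "ade_labels (Dt n) = replicate (n - 3) 2 @ [1, 1, 1, 1]"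
| "ade_labels Et6 = [3, 2, 1, 2, 1, 2, 1]"
| "ade_labels Et7 = [1, 2, 3, 4, 3, 2, 1, 2]"
| "ade_labels Et8 = [2, 4, 6, 5, 4, 3, 2, 1, 3]"

fun ade_edges :: "ade_type \<Rightarrow> nat set multiset" where
  "ade_edges (At n) = mset (map (\<lambda>i. {i, (i + 1) mod (n + 1)}) [0..<n + 1])"
| "ade_edges (Dt n) = mset (map (\<lambda>i. {i, i + 1}) [0..<n - 4])
      + {# {0, n - 3}, {0, n - 2}, {n - 4, n - 1}, {n - 4, n} #}"
| "ade_edges Et6 = {# {0,1}, {1,2}, {0,3}, {3,4}, {0,5}, {5,6} #}"
| "ade_edges Et7 = {# {0,1}, {1,2}, {2,3}, {3,4}, {4,5}, {5,6}, {3,7} #}"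
| "ade_edges Et8 = {# {0,1}, {1,2}, {2,3}, {3,4}, {4,5}, {5,6}, {6,7}, {2,8} #}"

definition ext_ADE_graph :: "'v set \<Rightarrow> 'v set multiset \<Rightarrow> ('v \<Rightarrow> nat) \<Rightarrow> bool" where
  "ext_ADE_graph V E m \<longleftrightarrow>
     (\<forall>ed \<in># E. ed \<subseteq> V) \<and>
     (\<exists>t \<phi>. ade_valid t \<and> bij_betw \<phi> V {0..<length (ade_labels t)} \<and>
        (\<forall>v\<in>V. m v = ade_labels t ! \<phi> v) \<and>
        image_mset (\<lambda>ed. \<phi> ` ed) E = ade_edges t)"

definition ade_O :: "'v set \<Rightarrow> ('v \<Rightarrow> nat) \<Rightarrow> 'v set" where
  "ade_O V m = {v \<in> V. m v = 1}"

definition ade_I :: "'v set \<Rightarrow> ('v \<Rightarrow> nat) \<Rightarrow> 'v set" where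
  "ade_I V m = V - ade_O V m"

text \<open>e = sum of m_v e_v, where deg v = e_v = deg(H restricted to C_v).\<close>
definition ade_e :: "'v set \<Rightarrow> ('v \<Rightarrow> nat) \<Rightarrow> ('v \<Rightarrow> int) \<Rightarrow> int" where
  "ade_e V m deg = (\<Sum>v\<in>V. int (m v) * deg v)"

definition ade_b :: "'v set \<Rightarrow> ('v \<Rightarrow> nat) \<Rightarrow> ('v \<Rightarrow> int) \<Rightarrow> int \<Rightarrow> 'v \<Rightarrow> int" where
  "ade_b V m deg chi v = \<lceil>real_of_int (deg v) * real_of_int chi / real_of_int (ade_e V m deg)\<rceil>"

end

theory Submission
  imports Defs
begin

lemma ade_labels_pos: "k < length (ade_labels t) \<Longrightarrow> ade_labels t ! k > 0"
proof -
  assume k: "k < length (ade_labels t)"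
  have "\<forall>x\<in>set (ade_labels t). x > 0"
    by (cases t) auto
  then show ?thesis using k nth_mem by blast
qed

lemma ade_labels_ne: "ade_valid t \<Longrightarrow> length (ade_labels t) > 0"
  by (cases t) auto

theorem lemma3p13:
  fixes V :: "'v set" and E :: "'v set multiset" and m :: "'v \<Rightarrow> nat"
    and deg :: "'v \<Rightarrow> int" and chi :: int
  assumes ADE: "ext_ADE_graph V E m"
    and chi_pos: "chi > 0"
    and ample: "\<forall>v\<in>V. deg v > 0"
    and sum_b: "(\<Sum>w\<in>ade_O V m. ade_b V m deg chi w) = chi + int (card (ade_O V m)) - 1"
  shows "(\<forall>i\<in>ade_I V m. ade_b V m deg chi i = 1) \<and>
         (\<forall>J (f::real). J \<subseteq> ade_O V m \<longrightarrow> 0 \<le> f \<longrightarrow>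
            f \<le> real_of_int (\<Sum>i\<in>ade_I V m. int (m i) * deg i) \<longrightarrow>
            (J \<noteq> ade_O V m \<or> f < real_of_int (\<Sum>i\<in>ade_I V m. int (m i) * deg i)) \<longrightarrow>
            real_of_int (1 - int (card J) + (\<Sum>j\<in>J. ade_b V m deg chi j)) >
              (f + real_of_int (\<Sum>j\<in>J. deg j)) / real_of_int (ade_e V m deg) * real_of_int chi)"
proof -
  from ADE obtain t \<phi> where tv: "ade_valid t" and bij: "bij_betw \<phi> V {0..<length (ade_labels t)}"
    and lab: "\<forall>v\<in>V. m v = ade_labels t ! \<phi> v"
    unfolding ext_ADE_graph_def by blast
  have finV: "finite V" using bij bij_betw_finite by blast
  have Vne: "V \<noteq> {}" using bij ade_labels_ne[OF tv] by (auto simp: bij_betw_def)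
  have mpos: "\<And>v. v \<in> V \<Longrightarrow> m v \<ge> 1"
  proof -
    fix v assume "v \<in> V"
    then have "\<phi> v < length (ade_labels t)" using bij by (auto simp: bij_betw_def)
    then show "m v \<ge> 1" using lab \<open>v \<in> V\<close> ade_labels_pos by (metis Suc_leI One_nat_def)
  qed
  define Os where "Os = ade_O V m"
  define Is where "Is = ade_I V m"
  have OV: "Os \<subseteq> V" and IV: "Is \<subseteq> V" and OI: "Os \<inter> Is = {}" and OIV: "V = Os \<union> Is"
    by (auto simp: Os_def Is_def ade_O_def ade_I_def)
  have finO: "finite Os" and finI: "finite Is" using finV OV IV finite_subset by auto
  have mO: "\<And>w. w \<in> Os \<Longrightarrow> m w = 1" by (auto simp: Os_def ade_O_def)
  have mI: "\<And>i. i \<in> Is \<Longrightarrow> m i \<ge> 2"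
  proof -
    fix i assume i: "i \<in> Is"
    then have "m i \<noteq> 1" "i \<in> V" by (auto simp: Is_def ade_I_def ade_O_def)
    with mpos[of i] show "m i \<ge> 2" by linarith
  qed
  define eO where "eO = real_of_int (\<Sum>w\<in>Os. deg w)"
  define eI where "eI = real_of_int (\<Sum>i\<in>Is. int (m i) * deg i)"
  define ee where "ee = real_of_int (ade_e V m deg)"
  have eesum: "ee = eO + eI"
  proof -
    have "ade_e V m deg = (\<Sum>v\<in>Os. int (m v) * deg v) + (\<Sum>v\<in>Is. int (m v) * deg v)"
      unfolding ade_e_def using OIV OI finO finI by (simp add: sum.union_disjoint)
    also have "(\<Sum>v\<in>Os. int (m v) * deg v) = (\<Sum>w\<in>Os. deg w)"
      using mO by (intro sum.cong) auto
    finally show ?thesis unfolding ee_def eO_def eI_def by simp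
  qed
  have eOnn: "eO \<ge> 0" unfolding eO_def using ample OV by (simp, intro sum_nonneg, force intro: less_imp_le)
  have eInn: "eI \<ge> 0" unfolding eI_def using ample IV by (simp, intro sum_nonneg, force intro: less_imp_le)
  have nn: "\<And>v. v \<in> V \<Longrightarrow> 0 \<le> int (m v) * deg v"
    using ample by (simp add: less_imp_le)
  have eepos: "ee > 0"
  proof -
    obtain v where v: "v \<in> V" using Vne by blast
    have "int (m v) * deg v > 0" using mpos[OF v] ample v by simp
    moreover have "int (m v) * deg v \<le> ade_e V m deg"
      unfolding ade_e_def using finV v ample mpos
      by (intro member_le_sum) (use nn IV in auto)
    ultimately show ?thesis unfolding ee_def by simp
  qed
  define x where "x v = real_of_int (deg v) * real_of_int chi / ee" for v
  define b where "b v = ade_b V m deg chi v" for v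
  have b_eq: "b v = \<lceil>x v\<rceil>" for v unfolding b_def x_def ade_b_def ee_def by simp
  define s where "s v = real_of_int (b v) - x v" for v
  have s0: "s v \<ge> 0" for v unfolding s_def b_eq by simp
  have s1: "s v < 1" for v unfolding s_def b_eq by linarith
  have sumxJ: "(\<Sum>j\<in>J. x j) = real_of_int (\<Sum>j\<in>J. deg j) * real_of_int chi / ee" for J
    unfolding x_def by (simp add: sum_divide_distrib sum_distrib_right)
  have sumbO: "(\<Sum>w\<in>Os. real_of_int (b w)) = real_of_int chi + real (card Os) - 1"
    using sum_b unfolding Os_def b_def by (metis of_int_of_nat_eq of_int_sum of_int_add of_int_diff of_int_1)
  have sumsO: "(\<Sum>w\<in>Os. s w) = real (card Os) - 1 + eI * real_of_int chi / ee"
  proof -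
    have "(\<Sum>w\<in>Os. s w) = (\<Sum>w\<in>Os. real_of_int (b w)) - (\<Sum>w\<in>Os. x w)"
      unfolding s_def by (simp add: sum_subtractf)
    also have "(\<Sum>w\<in>Os. x w) = eO * real_of_int chi / ee" using sumxJ eO_def by simp
    finally have A: "(\<Sum>w\<in>Os. s w) = real_of_int chi + real (card Os) - 1 - eO * real_of_int chi / ee"
      using sumbO by simp
    have B: "real_of_int chi = eO * real_of_int chi / ee + eI * real_of_int chi / ee"
    proof -
      have "eO * real_of_int chi / ee + eI * real_of_int chi / ee = (eO + eI) * real_of_int chi / ee"
        by (simp add: add_divide_distrib distrib_right)
      also have "\<dots> = real_of_int chi" using eesum eepos by simp
      finally show ?thesis by simp
    qed
    show ?thesis using A B by linarith
  qed
  have sOle: "(\<Sum>w\<in>Os. s w) \<le> real (card Os)"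
    using sum_mono[of Os s "\<lambda>_. 1"] s1 less_imp_le by fastforce
  have eIchi: "eI * real_of_int chi / ee \<le> 1" using sumsO sOle by linarith
  have part1: "\<forall>i\<in>Is. b i = 1"
  proof
    fix i assume i: "i \<in> Is"
    have iV: "i \<in> V" using i IV by auto
    have le: "real (m i) * real_of_int (deg i) \<le> eI"
    proof -
      have "int (m i) * deg i \<le> (\<Sum>i\<in>Is. int (m i) * deg i)"
        using finI i ample IV by (intro member_le_sum) (use nn IV in auto)
      then show ?thesis unfolding eI_def by (metis of_int_le_iff of_int_mult of_int_of_nat_eq)
    qed
    have xpos: "x i > 0" unfolding x_def using ample iV chi_pos eepos by simp
    have "real (m i) * x i \<le> eI * real_of_int chi / ee"
      unfolding x_def using le chi_pos eepos
      by (simp add: divide_right_mono mult_right_mono)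
    moreover have "2 * x i \<le> real (m i) * x i"
      using mI[OF i] xpos by (intro mult_right_mono) auto
    ultimately have "x i < 1" using eIchi by linarith
    then show "b i = 1" unfolding b_eq using xpos by (simp add: ceiling_eq_iff)
  qed
  have part2: "real_of_int (1 - int (card J) + (\<Sum>j\<in>J. b j)) >
              (f + real_of_int (\<Sum>j\<in>J. deg j)) / ee * real_of_int chi"
    if J: "J \<subseteq> Os" and f0: "0 \<le> f" and fle: "f \<le> eI" and strict: "J \<noteq> Os \<or> f < eI" for J f
  proof -
    have finJ: "finite J" using J finO finite_subset by blast
    have split: "(\<Sum>w\<in>Os. s w) = (\<Sum>j\<in>J. s j) + (\<Sum>w\<in>Os-J. s w)"
      using finO J by (metis sum.subset_diff add.commute)
    have cardO: "real (card Os) = real (card J) + real (card (Os - J))"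
      using finO J by (simp add: card_Diff_subset card_mono finJ of_nat_diff)
    have rest_le: "(\<Sum>w\<in>Os-J. s w) \<le> real (card (Os - J))"
      using sum_mono[of "Os-J" s "\<lambda>_. 1"] s1 less_imp_le by fastforce
    have rest_lt: "(\<Sum>w\<in>Os-J. s w) < real (card (Os - J))" if "J \<noteq> Os"
    proof -
      have "Os - J \<noteq> {}" using that J by blast
      then have "(\<Sum>w\<in>Os-J. s w) < (\<Sum>w\<in>Os-J. 1)"
        using finO s1 by (intro sum_strict_mono) auto
      then show ?thesis by simp
    qed
    have fchi: "f * real_of_int chi / ee \<le> eI * real_of_int chi / ee"
      using fle chi_pos eepos by (simp add: divide_right_mono mult_right_mono)
    have fchi_lt: "f * real_of_int chi / ee < eI * real_of_int chi / ee" if "f < eI"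
      using that chi_pos eepos by (simp add: divide_strict_right_mono)
    have key: "1 - real (card J) + (\<Sum>j\<in>J. s j) - f * real_of_int chi / ee > 0"
      using strict rest_le rest_lt fchi fchi_lt split sumsO cardO by fastforce
    have "real_of_int (1 - int (card J) + (\<Sum>j\<in>J. b j)) =
          1 - real (card J) + (\<Sum>j\<in>J. s j) + (\<Sum>j\<in>J. x j)"
      unfolding s_def by (simp add: sum_subtractf)
    moreover have "(f + real_of_int (\<Sum>j\<in>J. deg j)) / ee * real_of_int chi =
          f * real_of_int chi / ee + (\<Sum>j\<in>J. x j)"
      unfolding sumxJ using eepos by (simp add: field_simps)
    ultimately show ?thesis using key by linarith
  qed
  show ?thesis
    using part1 part2 unfolding Os_def[symmetric] Is_def[symmetric] b_def[symmetric]
      eI_def[symmetric] ee_def[symmetric] by blast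
qed

end
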